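(* There exist reduced valuation monoids $H_1$ and $H_2$ that are not isomorphic but such that $\mathcal{P}_{\mathrm{fin},1}(H_1)\simeq\mathcal{P}_{\mathrm{fin},1}(H_2)$. For instance, one may take the additively written submonoids of $(\mathbb{Z}^2,+)$ given by $H_1=(\mathbb{Z}\times\mathbb{N})\cup(\mathbb{N}_0\times\{0\})$ and $H_2=\{(x,y)\in\mathbb{Z}^2: y\le \alpha x\}$, where $\alpha>0$ is an irrational real number.
   Context: $\mathbb{N}$ denotes the positive integers and $\mathbb{N}_0$ the non-negative integers. A commutative monoid $H$ is cancellative if $ac=bc$ implies $a=b$. For a commutative cancellative monoid $H$, $\mathsf{q}(H)$ denotes its quotient group, with $H\subseteq\mathsf{q}(H)$. A commutative cancellative monoid $H$ is a valuation monoid if for every $x\in\mathsf{q}(H)$ we have $x\in H$ or $x^{-1}\in H$ (additively: $x\in H$ or $-x\in H$); it is reduced if its only invertible element is the identity. For a monoid $H$ with identity $1$, $\mathcal{P}_{\mathrm{fin},1}(H)$ is the set of all finite subsets of $H$ containing the identity, a monoid under setwise multiplication $(X,Y)\mapsto\{xy: x\in X, y\in Y\}$ (setwise addition in the additive case) with identity $\{1\}$. *)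

theory Defs
  imports Complex_Main "HOL-Library.Product_Plus"
begin

text \<open>Commutative monoids are represented additively as submonoids H of an abelian
group (here of int \<times> int); such monoids are automatically cancellative.\<close>

definition submonoid :: "'a::ab_group_add set \<Rightarrow> bool" where
  "submonoid H \<longleftrightarrow> 0 \<in> H \<and> (\<forall>a\<in>H. \<forall>b\<in>H. a + b \<in> H)"

definition qgroup :: "'a::ab_group_add set \<Rightarrow> 'a set" where
  "qgroup H = {a - b | a b. a \<in> H \<and> b \<in> H}"

definition valuation_monoid :: "'a::ab_group_add set \<Rightarrow> bool" where
  "valuation_monoid H \<longleftrightarrow> submonoid H \<and> (\<forall>x\<in>qgroup H. x \<in> H \<or> - x \<in> H)"

definition reduced_monoid :: "'a::ab_group_add set \<Rightarrow> bool" where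
  "reduced_monoid H \<longleftrightarrow> submonoid H \<and> (\<forall>x\<in>H. - x \<in> H \<longrightarrow> x = 0)"

definition monoid_iso :: "'a::ab_group_add set \<Rightarrow> 'b::ab_group_add set \<Rightarrow> bool" where
  "monoid_iso H1 H2 \<longleftrightarrow> (\<exists>f. bij_betw f H1 H2 \<and> (\<forall>a\<in>H1. \<forall>b\<in>H1. f (a + b) = f a + f b))"

definition setadd :: "'a::plus set \<Rightarrow> 'a set \<Rightarrow> 'a set" where
  "setadd X Y = {x + y | x y. x \<in> X \<and> y \<in> Y}"

definition Pfin1 :: "'a::zero set \<Rightarrow> 'a set set" where
  "Pfin1 H = {X. finite X \<and> 0 \<in> X \<and> X \<subseteq> H}"

definition Pfin1_iso :: "'a::ab_group_add set \<Rightarrow> 'b::ab_group_add set \<Rightarrow> bool" where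
  "Pfin1_iso H1 H2 \<longleftrightarrow> (\<exists>F. bij_betw F (Pfin1 H1) (Pfin1 H2) \<and>
      (\<forall>X\<in>Pfin1 H1. \<forall>Y\<in>Pfin1 H1. F (setadd X Y) = setadd (F X) (F Y)))"

definition H1 :: "(int \<times> int) set" where
  "H1 = {(x, y). y > 0} \<union> {(x, y). x \<ge> 0 \<and> y = 0}"

definition H2 :: "real \<Rightarrow> (int \<times> int) set" where
  "H2 \<alpha> = {(x, y). real_of_int y \<le> \<alpha> * real_of_int x}"

end

theory Submission
  imports Defs
begin

definition ismin :: "'a::ab_group_add set \<Rightarrow> 'a set \<Rightarrow> 'a \<Rightarrow> bool" where
  "ismin K X m \<longleftrightarrow> m \<in> X \<and> (\<forall>x\<in>X. x - m \<in> K)"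

definition total :: "'a::ab_group_add set \<Rightarrow> bool" where
  "total K \<longleftrightarrow> (\<forall>x. x \<in> K \<or> - x \<in> K)"

lemma min_ex:
  assumes "submonoid K" "total K" "finite X" "X \<noteq> {}"
  shows "\<exists>m. ismin K X m"
  using assms(3,4)
proof (induction X rule: finite_ne_induct)
  case (singleton x)
  then show ?case using assms(1) by (auto simp: ismin_def submonoid_def)
next
  case (insert a F)
  then obtain m where m: "ismin K F m" by blast
  show ?case
  proof (cases "a - m \<in> K")
    case True
    then show ?thesis using m by (auto simp: ismin_def)
  next
    case False
    then have "m - a \<in> K" using assms(2) unfolding total_def by (metis minus_diff_eq)
    then have "\<forall>x\<in>F. x - a \<in> K" using m assms(1) unfolding ismin_def submonoid_def
      by (metis diff_add_cancel add_diff_eq)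
    then show ?thesis using assms(1) by (auto simp: ismin_def submonoid_def)
  qed
qed

lemma min_uniq:
  assumes "reduced_monoid K" "ismin K X m" "ismin K X m'"
  shows "m = m'"
proof -
  have "m - m' \<in> K" "m' - m \<in> K" using assms(2,3) by (auto simp: ismin_def)
  then have "m - m' = 0" using assms(1) unfolding reduced_monoid_def by (metis minus_diff_eq)
  then show ?thesis by simp
qed

lemma ismin_sum:
  assumes "submonoid K" "ismin K X a" "ismin K Y b"
  shows "ismin K (setadd X Y) (a + b)"
proof -
  have "x + y - (a + b) \<in> K" if "x \<in> X" "y \<in> Y" for x y
  proof -
    have "x + y - (a + b) = (x - a) + (y - b)" by (simp add: algebra_simps)
    then show ?thesis using assms that unfolding ismin_def submonoid_def by metis
  qed
  then show ?thesis using assms unfolding ismin_def setadd_def by blast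
qed

lemma ismin_tr:
  assumes "ismin K X m"
  shows "ismin K ((\<lambda>x. x - c) ` X) (m - c)"
  using assms unfolding ismin_def by auto

definition mn :: "'a::ab_group_add set \<Rightarrow> 'a set \<Rightarrow> 'a" where
  "mn K X = (THE m. ismin K X m)"

lemma mn_eq:
  assumes "reduced_monoid K" "ismin K X m"
  shows "mn K X = m"
  unfolding mn_def using assms min_uniq by blast

lemma setadd_tr:
  fixes a b :: "'a::ab_group_add"
  shows "(\<lambda>z. z - (a + b)) ` setadd X Y = setadd ((\<lambda>x. x - a) ` X) ((\<lambda>y. y - b) ` Y)"
proof -
  have "\<And>x y. x + y - (a + b) = (x - a) + (y - b)" by (simp add: algebra_simps)
  show ?thesis
  proof (rule set_eqI, rule iffI)
    fix z assume "z \<in> (\<lambda>z. z - (a + b)) ` setadd X Y"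
    then obtain x y where xy: "x \<in> X" "y \<in> Y" "z = x + y - (a + b)" unfolding setadd_def by blast
    then have "z = (x - a) + (y - b)" "x - a \<in> (\<lambda>x. x - a) ` X" "y - b \<in> (\<lambda>y. y - b) ` Y"
      by (auto simp: algebra_simps)
    then show "z \<in> setadd ((\<lambda>x. x - a) ` X) ((\<lambda>y. y - b) ` Y)"
      unfolding setadd_def by blast
  next
    fix z assume "z \<in> setadd ((\<lambda>x. x - a) ` X) ((\<lambda>y. y - b) ` Y)"
    then obtain x y where "x \<in> X" "y \<in> Y" "z = (x - a) + (y - b)" unfolding setadd_def by blast
    then have "z = x + y - (a + b)" "x + y \<in> setadd X Y" unfolding setadd_def by (auto simp: algebra_simps)
    then show "z \<in> (\<lambda>z. z - (a + b)) ` setadd X Y" by blast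
  qed
qed

lemma Pfin1_iso_general:
  fixes H K :: "'a::ab_group_add set"
  assumes sH: "submonoid H" "total H" "reduced_monoid H"
    and sK: "submonoid K" "total K" "reduced_monoid K"
  shows "Pfin1_iso H K"
proof -
  define F where "F X = (\<lambda>x. x - mn K X) ` X" for X
  have exK: "\<exists>m. ismin K X m" if "X \<in> Pfin1 H" for X
    using min_ex[OF sK(1,2)] that unfolding Pfin1_def by blast
  have min0: "ismin H X 0" if "X \<in> Pfin1 H" for X
    using that unfolding Pfin1_def ismin_def by auto
  have inK: "F X \<in> Pfin1 K" if XH: "X \<in> Pfin1 H" for X
  proof -
    obtain m where m: "ismin K X m" using exK[OF XH] by blast
    then have "mn K X = m" using mn_eq sK(3) by blast
    then show ?thesis using XH m unfolding F_def Pfin1_def ismin_def by force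
  qed
  have inj: "inj_on F (Pfin1 H)"
  proof (rule inj_onI)
    fix X X' assume X: "X \<in> Pfin1 H" and X': "X' \<in> Pfin1 H" and eq: "F X = F X'"
    obtain m where m: "ismin K X m" using exK[OF X] by blast
    obtain m' where m': "ismin K X' m'" using exK[OF X'] by blast
    have mm: "mn K X = m" "mn K X' = m'" using mn_eq sK(3) m m' by blast+
    have "(\<lambda>z. z + m) ` ((\<lambda>x. x - m) ` X) = (\<lambda>z. z + m) ` ((\<lambda>x. x - m') ` X')"
      using eq mm unfolding F_def by simp
    then have XX: "X = (\<lambda>x. x - (m' - m)) ` X'"
      by (simp add: image_image algebra_simps)
    have "ismin H X (0 - (m' - m))" using ismin_tr[OF min0[OF X'], of "m' - m"] XX by simp
    then have "0 - (m' - m) = 0" using min_uniq[OF sH(3)] min0[OF X] by blast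
    then show "X = X'" using XX by simp
  qed
  have surj: "Pfin1 K \<subseteq> F ` Pfin1 H"
  proof
    fix Z assume Z: "Z \<in> Pfin1 K"
    then have "finite Z" "Z \<noteq> {}" unfolding Pfin1_def by auto
    then obtain m where m: "ismin H Z m" using min_ex[OF sH(1,2)] by blast
    define X where "X = (\<lambda>z. z - m) ` Z"
    have X: "X \<in> Pfin1 H" using m Z unfolding X_def Pfin1_def ismin_def by force
    have "ismin K Z 0" using Z unfolding Pfin1_def ismin_def by auto
    then have "ismin K X (0 - m)" unfolding X_def by (rule ismin_tr)
    then have "mn K X = - m" using mn_eq sK(3) by fastforce
    then have "F X = Z" unfolding F_def X_def by (simp add: image_image)
    then show "Z \<in> F ` Pfin1 H" using X by blast
  qed
  have hom: "F (setadd X Y) = setadd (F X) (F Y)" if X: "X \<in> Pfin1 H" and Y: "Y \<in> Pfin1 H" for X Y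
  proof -
    obtain a where a: "ismin K X a" using exK[OF X] by blast
    obtain b where b: "ismin K Y b" using exK[OF Y] by blast
    have "mn K X = a" "mn K Y = b" "mn K (setadd X Y) = a + b"
      using mn_eq sK(3) a b ismin_sum[OF sK(1) a b] by blast+
    then show ?thesis unfolding F_def using setadd_tr by metis
  qed
  show ?thesis unfolding Pfin1_iso_def bij_betw_def
    using inj inK surj hom by blast
qed


lemma H1_props: "submonoid H1" "total H1" "reduced_monoid H1"
  unfolding submonoid_def total_def reduced_monoid_def H1_def by (auto simp: zero_prod_def)

lemma irr:
  fixes \<alpha> :: real
  assumes "\<alpha> \<notin> \<rat>" "real_of_int y = \<alpha> * real_of_int x"
  shows "x = 0 \<and> y = 0"
proof (cases "x = 0")
  case True then show ?thesis using assms by simp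
next
  case False
  then have "\<alpha> = real_of_int y / real_of_int x" using assms(2) by (simp add: field_simps)
  then have "\<alpha> \<in> \<rat>" by (simp add: Rats_divide)
  then show ?thesis using assms(1) by blast
qed

lemma H2_props:
  assumes "\<alpha> \<notin> \<rat>"
  shows "submonoid (H2 \<alpha>)" "total (H2 \<alpha>)" "reduced_monoid (H2 \<alpha>)"
proof -
  show sm: "submonoid (H2 \<alpha>)" unfolding submonoid_def H2_def by (auto simp: distrib_left zero_prod_def)
  show "total (H2 \<alpha>)" unfolding total_def H2_def by auto
  have "p = 0" if "p \<in> H2 \<alpha>" "- p \<in> H2 \<alpha>" for p
  proof -
    obtain x y where p: "p = (x, y)" by fastforce
    then have "real_of_int y = \<alpha> * real_of_int x" using that unfolding H2_def by auto
    then have "x = 0 \<and> y = 0" by (rule irr[OF assms])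
    then show ?thesis using p by (simp add: zero_prod_def)
  qed
  then show "reduced_monoid (H2 \<alpha>)" using sm unfolding reduced_monoid_def by blast
qed

lemma total_val: "submonoid H \<Longrightarrow> total H \<Longrightarrow> valuation_monoid H"
  unfolding valuation_monoid_def total_def by blast

lemma not_iso:
  fixes \<alpha> :: real
  assumes "\<alpha> \<notin> \<rat>"
  shows "\<not> monoid_iso H1 (H2 \<alpha>)"
proof
  assume "monoid_iso H1 (H2 \<alpha>)"
  then obtain f where bij: "bij_betw f H1 (H2 \<alpha>)" and hom: "\<forall>a\<in>H1. \<forall>b\<in>H1. f (a + b) = f a + f b"
    unfolding monoid_iso_def by blast
  have z: "(0::int\<times>int) \<in> H1" unfolding H1_def by (simp add: zero_prod_def)
  have "f (0 + 0) = f 0 + f 0" using hom z by blast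
  then have "f 0 = f 0 + f 0" by simp
  then have f0: "f 0 = 0" by simp
  have a1: "((1::int), (0::int)) \<in> H1" unfolding H1_def by auto
  have cn: "(- int n, (1::int)) \<in> H1" for n unfolding H1_def by auto
  obtain p q where pq: "f (1, 0) = (p, q)" by fastforce
  obtain r s where rs: "f (0, 1) = (r, s)" by fastforce
  have fc: "f (- int n, 1) = (r - int n * p, s - int n * q)" for n
  proof (induction n)
    case 0 then show ?case using rs by simp
  next
    case (Suc n)
    have "(- int n, (1::int)) = (1, 0) + (- int (Suc n), 1)" by simp
    moreover have "f ((1, 0) + (- int (Suc n), 1)) = f (1, 0) + f (- int (Suc n), 1)"
      using hom a1 cn by blast
    ultimately have "f (- int n, 1) = (p, q) + f (- int (Suc n), 1)" using pq by simp
    moreover obtain u v where uv: "f (- int (Suc n), 1) = (u, v)" by fastforce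
    ultimately have "(r - int n * p, s - int n * q) = (p + u, q + v)" using Suc by simp
    then have "u = r - int n * p - p" "v = s - int n * q - q" by auto
    then show ?case using uv by (simp add: algebra_simps)
  qed
  have img: "f x \<in> H2 \<alpha>" if "x \<in> H1" for x using bij that unfolding bij_betw_def by blast
  have "(r - int n * p, s - int n * q) \<in> H2 \<alpha>" for n using img[OF cn] fc by metis
  then have ineq: "real_of_int (s - int n * q) \<le> \<alpha> * real_of_int (r - int n * p)" for n
    unfolding H2_def by simp
  have "(p, q) \<in> H2 \<alpha>" using img[OF a1] pq by metis
  then have le: "real_of_int q \<le> \<alpha> * real_of_int p" unfolding H2_def by simp
  have "(p, q) \<noteq> 0"
  proof
    assume "(p, q) = 0"
    then have "f (1, 0) = f 0" using pq f0 by simp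
    moreover have "inj_on f H1" using bij unfolding bij_betw_def by blast
    ultimately have "((1::int), (0::int)) = 0" using inj_onD a1 z by metis
    then show False by (simp add: zero_prod_def)
  qed
  then have "\<not> (p = 0 \<and> q = 0)" by (simp add: zero_prod_def)
  then have "real_of_int q \<noteq> \<alpha> * real_of_int p" using irr[OF assms] by blast
  then have pos: "\<alpha> * real_of_int p - real_of_int q > 0" using le by simp
  obtain n :: nat where n: "\<alpha> * real_of_int r - real_of_int s < real n * (\<alpha> * real_of_int p - real_of_int q)"
    using reals_Archimedean3[OF pos] by blast
  have "real_of_int (s - int n * q) \<le> \<alpha> * real_of_int (r - int n * p)" by (rule ineq)
  then have "real_of_int s - real n * real_of_int q \<le> \<alpha> * (real_of_int r - real n * real_of_int p)"
    by simp
  then have "real n * (\<alpha> * real_of_int p - real_of_int q) \<le> \<alpha> * real_of_int r - real_of_int s"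
    by (simp add: right_diff_distrib left_diff_distrib mult.left_commute)
  then show False using n by simp
qed

theorem corollary3:
  fixes \<alpha> :: real
  assumes "\<alpha> > 0" and "\<alpha> \<notin> \<rat>"
  shows "valuation_monoid H1 \<and> reduced_monoid H1 \<and>
         valuation_monoid (H2 \<alpha>) \<and> reduced_monoid (H2 \<alpha>) \<and>
         \<not> monoid_iso H1 (H2 \<alpha>) \<and> Pfin1_iso H1 (H2 \<alpha>)"
proof -
  have a: "valuation_monoid H1" using total_val H1_props by blast
  have b: "valuation_monoid (H2 \<alpha>)" using total_val H2_props[OF assms(2)] by blast
  show ?thesis using a b H1_props(3) H2_props(3)[OF assms(2)] not_iso[OF assms(2)]
    Pfin1_iso_general[OF H1_props H2_props[OF assms(2)]] by simp
qed

end
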